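(* Let $k$ and $M$ be positive integers, and let $M=p_{1}^{e_{1}}p_{2}^{e_{2}}\cdots p_{l}^{e_{l}}$ be the prime factorization of $M$, where $p_1,\dots,p_l$ are distinct primes. For any integers $n,m\geq \max\{e_j \mid 1\leq j\leq l\}$ satisfying $n\equiv m \pmod{\varphi(M)}$, we have \[ L(k,n)\equiv L(k,m)\pmod{M}. \]
   Context: A matrix with entries in $\{0,1\}$ is called lonesum if it is uniquely determined (among $0$-$1$ matrices of the same size) by its row sum vector and column sum vector. For positive integers $k,n$, $L(k,n)$ denotes the number of lonesum matrices of size $k\times n$. $\varphi$ denotes Euler's totient function. *)

theory Defs
  imports "HOL-Number_Theory.Number_Theory"
begin

text \<open>A k x n 0-1 matrix is represented as a function nat => nat => nat with
  entries in {0,1} at positions (i,j), i<k, j<n, and value 0 elsewhere.\<close>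

definition zero_one_matrices :: "nat \<Rightarrow> nat \<Rightarrow> (nat \<Rightarrow> nat \<Rightarrow> nat) set" where
  "zero_one_matrices k n =
     {A. (\<forall>i j. A i j \<in> {0,1}) \<and> (\<forall>i j. \<not> (i < k \<and> j < n) \<longrightarrow> A i j = 0)}"

definition row_sums :: "nat \<Rightarrow> (nat \<Rightarrow> nat \<Rightarrow> nat) \<Rightarrow> nat \<Rightarrow> nat" where
  "row_sums n A i = (\<Sum>j<n. A i j)"

definition col_sums :: "nat \<Rightarrow> (nat \<Rightarrow> nat \<Rightarrow> nat) \<Rightarrow> nat \<Rightarrow> nat" where
  "col_sums k A j = (\<Sum>i<k. A i j)"

definition lonesum :: "nat \<Rightarrow> nat \<Rightarrow> (nat \<Rightarrow> nat \<Rightarrow> nat) \<Rightarrow> bool" where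
  "lonesum k n A \<longleftrightarrow> A \<in> zero_one_matrices k n \<and>
     (\<forall>B \<in> zero_one_matrices k n.
        (\<forall>i<k. row_sums n B i = row_sums n A i) \<and> (\<forall>j<n. col_sums k B j = col_sums k A j)
        \<longrightarrow> B = A)"

definition L :: "nat \<Rightarrow> nat \<Rightarrow> nat" where
  "L k n = card {A. lonesum k n A}"

end

theory Submission imports Defs "HOL-Combinatorics.Transposition" begin

lemma pow_mod_period:
  fixes a q t n :: nat
  assumes "[a ^ t = 1] (mod q)"
  shows "[a ^ n = a ^ (n mod t)] (mod q)"
proof -
  have "a ^ n = a ^ (n mod t) * (a ^ t) ^ (n div t)"
    by (metis mult.commute div_mult_mod_eq power_add power_mult)
  also have "[\<dots> = a ^ (n mod t) * 1 ^ (n div t)] (mod q)"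
    by (intro cong_mult cong_refl cong_pow assms)
  finally show ?thesis by simp
qed

lemma pow_cong:
  fixes a M n m :: nat
  assumes "M > 0"
    and "\<forall>p \<in> prime_factors M. multiplicity p M \<le> n"
    and "\<forall>p \<in> prime_factors M. multiplicity p M \<le> m"
    and "[n = m] (mod totient M)"
  shows "[a ^ n = a ^ m] (mod M)"
proof -
  have M: "M = (\<Prod>p\<in>prime_factors M. p ^ multiplicity p M)"
    using prime_factorization_nat assms(1) by blast
  have "[a ^ n = a ^ m] (mod (\<Prod>p\<in>prime_factors M. p ^ multiplicity p M))"
  proof (rule coprime_cong_prod_nat)
    fix p q assume "p \<in> prime_factors M" "q \<in> prime_factors M" "p \<noteq> q"
    then show "coprime (p ^ multiplicity p M) (q ^ multiplicity q M)"
      by (metis primes_coprime in_prime_factors_imp_prime coprime_power_left_iff coprime_power_right_iff)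
  next
    fix p assume p: "p \<in> prime_factors M"
    define e where "e = multiplicity p M"
    have pr: "prime p" using p by auto
    have en: "e \<le> n" and em: "e \<le> m" using assms p e_def by auto
    show "[a ^ n = a ^ m] (mod p ^ multiplicity p M)"
    proof (cases "p dvd a")
      case True
      have "p ^ e dvd a ^ n"
        by (meson True dvd_trans le_imp_power_dvd en power_mono_iff dvd_power_same)
      moreover have "p ^ e dvd a ^ m"
        by (meson True dvd_trans le_imp_power_dvd em dvd_power_same)
      ultimately show ?thesis unfolding e_def[symmetric]
        by (metis cong_0_iff cong_sym cong_trans)
    next
      case False
      then have cop: "coprime a (p ^ e)"
        using pr by (metis coprime_commute coprime_power_right_iff prime_imp_coprime)
      define t where "t = totient (p ^ e)"
      have eu: "[a ^ t = 1] (mod p ^ e)" using euler_theorem[OF cop] t_def by simp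
      have "p ^ e dvd M" unfolding e_def by (rule multiplicity_dvd)
      then have "t dvd totient M" unfolding t_def by (rule totient_dvd)
      then have "[n = m] (mod t)" using assms(4) cong_dvd_modulus_nat by blast
      then have "n mod t = m mod t" by (simp add: cong_def)
      then show ?thesis unfolding e_def[symmetric]
        using pow_mod_period[OF eu, of n] pow_mod_period[OF eu, of m]
        by (metis cong_sym cong_trans)
    qed
  qed
  then show ?thesis using M by simp
qed

definition colset :: "nat \<Rightarrow> (nat \<Rightarrow> nat \<Rightarrow> nat) \<Rightarrow> nat \<Rightarrow> nat set" where
  "colset k A j = {i. i < k \<and> A i j = 1}"

definition nested :: "nat \<Rightarrow> nat \<Rightarrow> (nat \<Rightarrow> nat \<Rightarrow> nat) \<Rightarrow> bool" where
  "nested k n A \<longleftrightarrow> (\<forall>j<n. \<forall>j'<n. colset k A j \<subseteq> colset k A j' \<or> colset k A j' \<subseteq> colset k A j)"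

lemma zom_01: "A \<in> zero_one_matrices k n \<Longrightarrow> A i j = 0 \<or> A i j = 1"
  unfolding zero_one_matrices_def by auto

lemma zom_out: "A \<in> zero_one_matrices k n \<Longrightarrow> \<not> (i < k \<and> j < n) \<Longrightarrow> A i j = 0"
  unfolding zero_one_matrices_def by auto

lemma lonesum_nested:
  assumes "lonesum k n A"
  shows "nested k n A"
proof (rule ccontr)
  assume "\<not> nested k n A"
  then obtain j j' i1 i2 where jj: "j < n" "j' < n" and
    i1: "i1 \<in> colset k A j" "i1 \<notin> colset k A j'" and
    i2: "i2 \<in> colset k A j'" "i2 \<notin> colset k A j"
    unfolding nested_def by blast
  have Az: "A \<in> zero_one_matrices k n" using assms unfolding lonesum_def by blast
  have k: "i1 < k" "i2 < k" using i1 i2 by (auto simp: colset_def)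
  have v: "A i1 j = 1" "A i1 j' = 0" "A i2 j' = 1" "A i2 j = 0"
    using i1 i2 k zom_01[OF Az] by (auto simp: colset_def)
  have ne: "i1 \<noteq> i2" "j \<noteq> j'" using v by auto
  define B where "B = (\<lambda>i l. if l = j \<or> l = j' then A (transpose i1 i2 i) l else A i l)"
  have Bz: "B \<in> zero_one_matrices k n"
  proof -
    have "\<forall>i l. B i l \<in> {0,1}" unfolding B_def using zom_01[OF Az] by auto
    moreover have "\<forall>i l. \<not> (i < k \<and> l < n) \<longrightarrow> B i l = 0"
      unfolding B_def using zom_out[OF Az] k jj by (auto simp: transpose_def)
    ultimately show ?thesis unfolding zero_one_matrices_def by blast
  qed
  have rows: "row_sums n B i = row_sums n A i" if "i < k" for i
  proof -
    consider "i = i1" | "i = i2" | "i \<noteq> i1" "i \<noteq> i2" by blast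
    then show ?thesis
    proof cases
      case 1
      have "\<And>l. B i l = A i (transpose j j' l)"
        unfolding B_def 1 using v ne by (auto simp: transpose_def)
      then show ?thesis unfolding row_sums_def
        using sum.reindex_bij_betw[of "transpose j j'" "{..<n}" "{..<n}" "A i"] jj by simp
    next
      case 2
      have "\<And>l. B i l = A i (transpose j j' l)"
        unfolding B_def 2 using v ne by (auto simp: transpose_def)
      then show ?thesis unfolding row_sums_def
        using sum.reindex_bij_betw[of "transpose j j'" "{..<n}" "{..<n}" "A i"] jj by simp
    next
      case 3
      then have "\<And>l. B i l = A i l" unfolding B_def by (auto simp: transpose_def)
      then show ?thesis unfolding row_sums_def by simp
    qed
  qed
  have cols: "col_sums k B l = col_sums k A l" if "l < n" for l
  proof (cases "l = j \<or> l = j'")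
    case True
    then have "\<And>i. B i l = A (transpose i1 i2 i) l" unfolding B_def by auto
    then show ?thesis unfolding col_sums_def
      using sum.reindex_bij_betw[of "transpose i1 i2" "{..<k}" "{..<k}" "\<lambda>i. A i l"] k by simp
  next
    case False
    then have "\<And>i. B i l = A i l" unfolding B_def by auto
    then show ?thesis unfolding col_sums_def by simp
  qed
  have "B = A" using assms Bz rows cols unfolding lonesum_def by blast
  moreover have "B i1 j \<noteq> A i1 j" unfolding B_def using v by simp
  ultimately show False by simp
qed


lemma sum_le_eq_pointwise:
  fixes f g :: "'a \<Rightarrow> nat"
  assumes "finite S" "\<And>x. x \<in> S \<Longrightarrow> f x \<le> g x" "sum f S = sum g S" "x \<in> S"
  shows "f x = g x"
proof (rule ccontr)
  assume "f x \<noteq> g x"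
  then have "f x < g x" using assms(2,4) by fastforce
  then have "sum f S < sum g S" using assms by (intro sum_strict_mono_ex1) auto
  then show False using assms(3) by simp
qed

lemma nested_unique:
  assumes Az: "A \<in> zero_one_matrices k n" and nA: "nested k n A"
    and Bz: "B \<in> zero_one_matrices k n"
    and rows: "\<forall>i<k. row_sums n B i = row_sums n A i"
    and cols: "\<forall>j<n. col_sums k B j = col_sums k A j"
  shows "B = A"
proof -
  define c where "c j = (\<Sum>i<k. A i j)" for j
  define X where "X j j' = (\<Sum>i<k. A i j * B i j')" for j j'
  define Y where "Y j j' = min (c j) (c j')" for j j'
  have cB: "(\<Sum>i<k. B i j) = c j" if "j < n" for j
    using cols that unfolding col_sums_def c_def by auto
  have A01: "\<And>i j. A i j = 0 \<or> A i j = 1" using zom_01[OF Az] by blast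
  have B01: "\<And>i j. B i j = 0 \<or> B i j = 1" using zom_01[OF Bz] by blast
  have XY: "X j j' \<le> Y j j'" if "j < n" "j' < n" for j j'
  proof -
    have "X j j' \<le> c j" unfolding X_def c_def
      by (intro sum_mono) (use B01 in \<open>metis mult.right_neutral mult_le_mono2 zero_le_one le_refl mult_0_right\<close>)
    moreover have "X j j' \<le> c j'" unfolding X_def cB[OF that(2), symmetric]
      by (intro sum_mono) (use A01 in \<open>metis mult_1 mult_0 le_refl zero_le\<close>)
    ultimately show ?thesis unfolding Y_def by simp
  qed
  have AA: "(\<Sum>i<k. A i j * A i j') = Y j j'" if "j < n" "j' < n" for j j'
  proof -
    have sub: "(\<Sum>i<k. A i a * A i b) = c a \<and> c a \<le> c b"
      if "colset k A a \<subseteq> colset k A b" for a b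
    proof -
      have le: "A i a \<le> A i b" if "i < k" for i
        using \<open>colset k A a \<subseteq> colset k A b\<close> that A01[of i a] A01[of i b]
        unfolding colset_def by auto
      have "A i a * A i b = A i a" if "i < k" for i
        using le[OF that] A01[of i a] A01[of i b] by auto
      then have "(\<Sum>i<k. A i a * A i b) = c a" unfolding c_def by (intro sum.cong) auto
      moreover have "c a \<le> c b" unfolding c_def by (intro sum_mono le) simp
      ultimately show ?thesis by simp
    qed
    from nA that have "colset k A j \<subseteq> colset k A j' \<or> colset k A j' \<subseteq> colset k A j"
      unfolding nested_def by blast
    then show ?thesis
    proof
      assume "colset k A j \<subseteq> colset k A j'"
      from sub[OF this] show ?thesis unfolding Y_def by simp
    next
      assume "colset k A j' \<subseteq> colset k A j"
      from sub[OF this] show ?thesis unfolding Y_def by (simp add: mult.commute)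
    qed
  qed
  have rB: "(\<Sum>j'<n. B i j') = (\<Sum>j<n. A i j)" if "i < k" for i
    using rows that unfolding row_sums_def by auto
  have "(\<Sum>j<n. \<Sum>j'<n. X j j') = (\<Sum>i<k. (\<Sum>j<n. A i j) * (\<Sum>j'<n. B i j'))"
    unfolding X_def sum_product by (simp add: sum.swap[of _ "{..<k}"] sum_distrib_left)
  also have "\<dots> = (\<Sum>i<k. (\<Sum>j<n. A i j) * (\<Sum>j'<n. A i j'))"
    using rB by simp
  also have "\<dots> = (\<Sum>j<n. \<Sum>j'<n. \<Sum>i<k. A i j * A i j')"
    unfolding sum_product by (simp add: sum.swap[of _ "{..<k}"] sum_distrib_left)
  also have "\<dots> = (\<Sum>j<n. \<Sum>j'<n. Y j j')"
    using AA by simp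
  finally have tot: "(\<Sum>j<n. \<Sum>j'<n. X j j') = (\<Sum>j<n. \<Sum>j'<n. Y j j')" .
  have diag: "X j j = c j" if "j < n" for j
  proof -
    have inner: "(\<Sum>j'<n. X j j') = (\<Sum>j'<n. Y j j')"
      using sum_le_eq_pointwise[of "{..<n}" "\<lambda>j. \<Sum>j'<n. X j j'" "\<lambda>j. \<Sum>j'<n. Y j j'", OF _ _ tot]
        XY that by (auto intro: sum_mono)
    have "X j j = Y j j"
      using sum_le_eq_pointwise[of "{..<n}" "X j" "Y j", OF _ _ inner] XY that by auto
    then show ?thesis unfolding Y_def by simp
  qed
  have eq: "A i j = B i j" if "i < k" "j < n" for i j
  proof -
    have d: "(\<Sum>i<k. A i j * B i j) = (\<Sum>i<k. A i j)" using diag[OF that(2)]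
      unfolding X_def c_def .
    have e1: "A i j * B i j = A i j"
      using sum_le_eq_pointwise[of "{..<k}" "\<lambda>i. A i j * B i j" "\<lambda>i. A i j", OF _ _ d] that B01
      by (metis finite_lessThan lessThan_iff mult.right_neutral mult_0_right le_refl zero_le)
    have d2: "(\<Sum>i<k. A i j * B i j) = (\<Sum>i<k. B i j)" using d cB[OF that(2)] unfolding c_def by simp
    have e2: "A i j * B i j = B i j"
      using sum_le_eq_pointwise[of "{..<k}" "\<lambda>i. A i j * B i j" "\<lambda>i. B i j", OF _ _ d2] that A01
      by (metis finite_lessThan lessThan_iff mult_1 mult_0 le_refl zero_le)
    show ?thesis using e1 e2 by simp
  qed
  show ?thesis
  proof (rule ext, rule ext)
    fix i j show "B i j = A i j"
      using eq zom_out[OF Az] zom_out[OF Bz] by (cases "i < k \<and> j < n") auto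
  qed
qed


lemma lonesum_iff: "lonesum k n A \<longleftrightarrow> A \<in> zero_one_matrices k n \<and> nested k n A"
  using lonesum_nested nested_unique unfolding lonesum_def by blast

definition cmp_chain :: "nat set set \<Rightarrow> bool" where
  "cmp_chain C \<longleftrightarrow> (\<forall>X\<in>C. \<forall>Y\<in>C. X \<subseteq> Y \<or> Y \<subseteq> X)"

definition onto :: "nat \<Rightarrow> nat set set \<Rightarrow> (nat \<Rightarrow> nat set) set" where
  "onto n C = {f \<in> {..<n} \<rightarrow>\<^sub>E C. f ` {..<n} = C}"

definition Chains :: "nat \<Rightarrow> nat set set set" where
  "Chains k = {C. C \<subseteq> Pow {..<k} \<and> cmp_chain C}"

definition mat :: "nat \<Rightarrow> (nat \<Rightarrow> nat set) \<Rightarrow> nat \<Rightarrow> nat \<Rightarrow> nat" where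
  "mat n f = (\<lambda>i j. if j < n \<and> i \<in> f j then 1 else 0)"

lemma L_sum: "L k n = (\<Sum>C\<in>Chains k. card (onto n C))"
proof -
  define F where "F = {f \<in> {..<n} \<rightarrow>\<^sub>E Pow {..<k}. cmp_chain (f ` {..<n})}"
  have colmat: "colset k (mat n f) j = f j" if "j < n" "f j \<subseteq> {..<k}" for f j
    using that unfolding colset_def mat_def by auto
  have a: "{A. lonesum k n A} = mat n ` F"
  proof safe
    fix A assume "lonesum k n A"
    then have Az: "A \<in> zero_one_matrices k n" and nA: "nested k n A"
      using lonesum_iff by auto
    define f where "f = (\<lambda>j\<in>{..<n}. colset k A j)"
    have "f \<in> {..<n} \<rightarrow>\<^sub>E Pow {..<k}" unfolding f_def
      by (rule restrict_PiE_iff[THEN iffD2]) (auto simp: colset_def)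
    moreover have "cmp_chain (f ` {..<n})" unfolding cmp_chain_def
    proof (intro ballI)
      fix X Y assume "X \<in> f ` {..<n}" "Y \<in> f ` {..<n}"
      then obtain j j' where "j < n" "j' < n" "X = colset k A j" "Y = colset k A j'"
        unfolding f_def by auto
      then show "X \<subseteq> Y \<or> Y \<subseteq> X" using nA unfolding nested_def by blast
    qed
    ultimately have "f \<in> F" unfolding F_def by blast
    moreover have "A = mat n f"
    proof (rule ext, rule ext)
      fix i j show "A i j = mat n f i j"
        using zom_01[OF Az, of i j] zom_out[OF Az, of i j]
        unfolding mat_def f_def colset_def by auto
    qed
    ultimately show "A \<in> mat n ` F" by blast
  next
    fix f assume f: "f \<in> F"
    have sub: "f j \<subseteq> {..<k}" if "j < n" for j using f that unfolding F_def by auto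
    have "mat n f \<in> zero_one_matrices k n"
      unfolding zero_one_matrices_def mat_def using sub by auto
    moreover have "nested k n (mat n f)"
      unfolding nested_def
    proof (intro allI impI)
      fix j j' assume j: "j < n" "j' < n"
      have "f j \<in> f ` {..<n}" "f j' \<in> f ` {..<n}" using j by auto
      then have "f j \<subseteq> f j' \<or> f j' \<subseteq> f j" using f unfolding F_def cmp_chain_def by blast
      then show "colset k (mat n f) j \<subseteq> colset k (mat n f) j' \<or> colset k (mat n f) j' \<subseteq> colset k (mat n f) j"
        using colmat[of j f] colmat[of j' f] sub j by simp
    qed
    ultimately show "lonesum k n (mat n f)" using lonesum_iff by blast
  qed
  have b: "inj_on (mat n) F"
  proof (rule inj_onI)
    fix f g assume f: "f \<in> F" and g: "g \<in> F" and eq: "mat n f = mat n g"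
    show "f = g"
    proof (rule ext)
      fix j show "f j = g j"
      proof (cases "j < n")
        case True
        have "i \<in> f j \<longleftrightarrow> i \<in> g j" for i
        proof -
          have "mat n f i j = mat n g i j" using eq by simp
          then have "(if i \<in> f j then 1::nat else 0) = (if i \<in> g j then 1 else 0)"
            using True by (simp add: mat_def)
          then show ?thesis by (cases "i \<in> f j"; cases "i \<in> g j") simp_all
        qed
        then show ?thesis by blast
      next
        case False
        have "f \<in> {..<n} \<rightarrow>\<^sub>E Pow {..<k}" "g \<in> {..<n} \<rightarrow>\<^sub>E Pow {..<k}"
          using f g unfolding F_def by blast+
        then show ?thesis using False PiE_arb[of f] PiE_arb[of g] by simp
      qed
    qed
  qed
  have c: "F = (\<Union>C\<in>Chains k. onto n C)"
  proof safe
    fix f assume f: "f \<in> F"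
    then have fP: "f \<in> {..<n} \<rightarrow>\<^sub>E Pow {..<k}" and ch: "cmp_chain (f ` {..<n})"
      unfolding F_def by blast+
    have "f ` {..<n} \<subseteq> Pow {..<k}" using fP by (auto simp: PiE_iff)
    then have "f ` {..<n} \<in> Chains k" using ch unfolding Chains_def by blast
    moreover have "f \<in> onto n (f ` {..<n})"
      unfolding onto_def using fP by (simp add: PiE_iff)
    ultimately show "f \<in> (\<Union>C\<in>Chains k. onto n C)" by blast
  next
    fix f C assume C: "C \<in> Chains k" and fo: "f \<in> onto n C"
    then have "f \<in> {..<n} \<rightarrow>\<^sub>E C" "f ` {..<n} = C" unfolding onto_def by blast+
    moreover have "C \<subseteq> Pow {..<k}" "cmp_chain C" using C unfolding Chains_def by blast+
    ultimately have "f \<in> {..<n} \<rightarrow>\<^sub>E Pow {..<k}" "cmp_chain (f ` {..<n})"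
      by (auto simp: PiE_iff)
    then show "f \<in> F" unfolding F_def by blast
  qed
  have fin: "finite (Chains k)"
  proof (rule finite_subset)
    show "Chains k \<subseteq> Pow (Pow {..<k})" unfolding Chains_def by blast
  qed simp
  have fin2: "finite (onto n C)" if "C \<in> Chains k" for C
  proof -
    have "C \<subseteq> Pow {..<k}" using that unfolding Chains_def by blast
    then have "finite C" by (rule finite_subset) simp
    then have "finite ({..<n} \<rightarrow>\<^sub>E C)" by (intro finite_PiE) simp
    moreover have "onto n C \<subseteq> {..<n} \<rightarrow>\<^sub>E C" unfolding onto_def by blast
    ultimately show ?thesis by (rule rev_finite_subset)
  qed
  have disj: "onto n C \<inter> onto n D = {}" if "C \<noteq> D" for C D
    using that unfolding onto_def by blast
  have "L k n = card F" unfolding L_def a using b by (rule card_image)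
  also have "\<dots> = (\<Sum>C\<in>Chains k. card (onto n C))" unfolding c
    using fin fin2 disj by (intro card_UN_disjoint) auto
  finally show ?thesis .
qed


lemma card_fun_sum:
  assumes "finite C"
  shows "card C ^ n = (\<Sum>D\<in>Pow C. card (onto n D))"
proof -
  have eq: "{..<n} \<rightarrow>\<^sub>E C = (\<Union>D\<in>Pow C. onto n D)"
  proof (intro equalityI subsetI)
    fix f assume f: "f \<in> {..<n} \<rightarrow>\<^sub>E C"
    then have "f ` {..<n} \<in> Pow C" by (auto simp: PiE_iff)
    moreover have "f \<in> onto n (f ` {..<n})" unfolding onto_def using f by (simp add: PiE_iff)
    ultimately show "f \<in> (\<Union>D\<in>Pow C. onto n D)" by blast
  next
    fix f assume "f \<in> (\<Union>D\<in>Pow C. onto n D)"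
    then obtain D where "D \<subseteq> C" "f \<in> onto n D" by blast
    then show "f \<in> {..<n} \<rightarrow>\<^sub>E C" unfolding onto_def by (auto simp: PiE_iff)
  qed
  have fin2: "finite (onto n D)" if "D \<in> Pow C" for D
  proof -
    have "finite D" using that assms by (auto intro: finite_subset)
    then have "finite ({..<n} \<rightarrow>\<^sub>E D)" by (intro finite_PiE) simp
    moreover have "onto n D \<subseteq> {..<n} \<rightarrow>\<^sub>E D" unfolding onto_def by blast
    ultimately show ?thesis by (rule rev_finite_subset)
  qed
  have disj: "onto n D \<inter> onto n E = {}" if "D \<noteq> E" for D E
    using that unfolding onto_def by blast
  have "card C ^ n = card ({..<n} \<rightarrow>\<^sub>E C)" by (simp add: card_PiE)
  also have "\<dots> = (\<Sum>D\<in>Pow C. card (onto n D))" unfolding eq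
    using assms fin2 disj by (intro card_UN_disjoint) auto
  finally show ?thesis .
qed

lemma onto_cong:
  fixes M n m :: nat
  assumes "finite C" "M > 0"
    and "\<forall>p \<in> prime_factors M. multiplicity p M \<le> n"
    and "\<forall>p \<in> prime_factors M. multiplicity p M \<le> m"
    and "[n = m] (mod totient M)"
  shows "[int (card (onto n C)) = int (card (onto m C))] (mod int M)"
  using assms(1)
proof (induction C rule: finite_psubset_induct)
  case (psubset C)
  have split: "int (card (onto r C)) = int (card C) ^ r - (\<Sum>D\<in>Pow C - {C}. int (card (onto r D)))" for r
  proof -
    have "int (card C) ^ r = int (card C ^ r)" by simp
    also have "\<dots> = (\<Sum>D\<in>Pow C. int (card (onto r D)))"
      using card_fun_sum[OF psubset.hyps(1), of r] by simp
    also have "\<dots> = int (card (onto r C)) + (\<Sum>D\<in>Pow C - {C}. int (card (onto r D)))"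
      using psubset.hyps(1) by (subst sum.remove[of _ C]) auto
    finally show ?thesis by simp
  qed
  have pw: "[int (card C) ^ n = int (card C) ^ m] (mod int M)"
    using pow_cong[OF assms(2-5), of "card C"] by (metis cong_int_iff of_nat_power)
  have rest: "[(\<Sum>D\<in>Pow C - {C}. int (card (onto n D))) = (\<Sum>D\<in>Pow C - {C}. int (card (onto m D)))] (mod int M)"
    by (intro cong_sum psubset.IH) auto
  show ?case unfolding split[of n] split[of m] using pw rest by (rule cong_diff)
qed

theorem theorem2p4:
  fixes k M n m :: nat
  assumes "k > 0" and "M > 0" and "n > 0" and "m > 0"
    and "\<forall>p \<in> prime_factors M. multiplicity p M \<le> n"
    and "\<forall>p \<in> prime_factors M. multiplicity p M \<le> m"
    and "[n = m] (mod totient M)"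
  shows "[L k n = L k m] (mod M)"
proof -
  have finC: "finite C" if "C \<in> Chains k" for C
  proof -
    have "C \<subseteq> Pow {..<k}" using that unfolding Chains_def by blast
    then show ?thesis by (rule finite_subset) simp
  qed
  have "[int (L k n) = int (L k m)] (mod int M)"
    unfolding L_sum of_nat_sum
    by (intro cong_sum onto_cong finC assms(2,5-7))
  then show ?thesis by (simp add: cong_int_iff)
qed

end
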